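(* Let $f$ and $g$ be L-additive arithmetic functions whose associated completely multiplicative functions $h_f$, $h_g$ are nonzero-valued, with generalized von Mangoldt functions $\Lambda_f,\Lambda_g$. Then for every positive integer $n$: $(\Lambda_f\ast\Lambda_g)(n)=\frac{(\alpha-1)f(p)g(p)}{h_f(p)h_g(p)}$ if $n=p^\alpha$ for a prime $p$ and integer $\alpha\geq1$; $(\Lambda_f\ast\Lambda_g)(n)=\frac{f(p)g(q)}{h_f(p)h_g(q)}+\frac{f(q)g(p)}{h_f(q)h_g(p)}$ if $n=p^\alpha q^\beta$ for distinct primes $p,q$ and integers $\alpha,\beta\geq1$; and $(\Lambda_f\ast\Lambda_g)(n)=0$ otherwise.
   Context: An arithmetic function $f:\mathbb{N}\to\mathbb{C}$ is L-additive if there is a completely multiplicative function $h_f$ such that $f(mn)=f(m)h_f(n)+f(n)h_f(m)$ for all positive integers $m,n$; such an $h_f$ is fixed (likewise $h_g$ for $g$). $\Lambda_f(n)=\frac{f(p)}{h_f(p)}$ if $n=p^k$ for some prime $p$ and integer $k\geq1$, and $0$ otherwise (similarly $\Lambda_g$). $\ast$ is Dirichlet convolution $(F\ast G)(n)=\sum_{d\mid n}F(d)G(n/d)$. *)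

theory Defs
  imports Complex_Main "HOL-Computational_Algebra.Primes"
begin

definition completely_multiplicative :: "(nat \<Rightarrow> complex) \<Rightarrow> bool" where
  "completely_multiplicative h \<longleftrightarrow> h 1 = 1 \<and> (\<forall>m n. m > 0 \<longrightarrow> n > 0 \<longrightarrow> h (m * n) = h m * h n)"

definition L_additive_with :: "(nat \<Rightarrow> complex) \<Rightarrow> (nat \<Rightarrow> complex) \<Rightarrow> bool" where
  "L_additive_with f h \<longleftrightarrow> completely_multiplicative h \<and>
     (\<forall>m n. m > 0 \<longrightarrow> n > 0 \<longrightarrow> f (m * n) = f m * h n + f n * h m)"

definition gen_mangoldt :: "(nat \<Rightarrow> complex) \<Rightarrow> (nat \<Rightarrow> complex) \<Rightarrow> nat \<Rightarrow> complex" where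
  "gen_mangoldt f h n =
     (if \<exists>p k. prime p \<and> k \<ge> 1 \<and> n = p ^ k
      then (let p = (THE p. prime p \<and> (\<exists>k\<ge>1. n = p ^ k)) in f p / h p)
      else 0)"

definition dirichlet_conv :: "(nat \<Rightarrow> complex) \<Rightarrow> (nat \<Rightarrow> complex) \<Rightarrow> nat \<Rightarrow> complex" where
  "dirichlet_conv F G n = (\<Sum>d | d dvd n. F d * G (n div d))"

end

theory Submission
  imports Defs
begin

definition PP :: "nat \<Rightarrow> bool" where
  "PP n \<longleftrightarrow> (\<exists>p k. prime p \<and> k \<ge> 1 \<and> n = p ^ k)"

lemma gm_pp:
  assumes "prime p" "k \<ge> 1"
  shows "gen_mangoldt f h (p ^ k) = f p / h p"
proof -
  have "(THE p'. prime p' \<and> (\<exists>k'\<ge>1. p ^ k = p' ^ k')) = p"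
  proof (rule the_equality)
    show "prime p \<and> (\<exists>k'\<ge>1. p ^ k = p ^ k')" using assms by auto
  next
    fix p' assume "prime p' \<and> (\<exists>k'\<ge>1. p ^ k = p' ^ k')"
    then show "p' = p" using assms prime_power_inj'(1)[of p p' k] by force
  qed
  then show ?thesis unfolding gen_mangoldt_def using assms by (auto simp: Let_def)
qed

lemma gm_not:
  assumes "\<not> PP n"
  shows "gen_mangoldt f h n = 0"
  using assms unfolding gen_mangoldt_def PP_def by auto

lemma PP_1: "\<not> PP 1"
  unfolding PP_def by (metis One_nat_def nat_power_eq_Suc_0_iff not_prime_1 not_one_le_zero)

lemma gm_1: "gen_mangoldt f h 1 = 0"
  using gm_not PP_1 by blast

lemma conv_restrict:
  assumes "n > 0"
  shows "dirichlet_conv (gen_mangoldt f hf) (gen_mangoldt g hg) n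
     = (\<Sum>d\<in>{d. d dvd n \<and> PP d \<and> PP (n div d)}. gen_mangoldt f hf d * gen_mangoldt g hg (n div d))"
  unfolding dirichlet_conv_def
proof (rule sum.mono_neutral_right)
  show "finite {d. d dvd n}" using assms by simp
  show "{d. d dvd n \<and> PP d \<and> PP (n div d)} \<subseteq> {d. d dvd n}" by auto
  show "\<forall>i\<in>{d. d dvd n} - {d. d dvd n \<and> PP d \<and> PP (n div d)}.
        gen_mangoldt f hf i * gen_mangoldt g hg (n div i) = 0"
    using gm_not by auto
qed

lemma mult_pq:
  fixes p q :: nat
  assumes "prime p" "prime q" "p \<noteq> q"
  shows "multiplicity p (p ^ a * q ^ b) = a"
proof -
  have "multiplicity p (p ^ a * q ^ b) = multiplicity p (p ^ a) + multiplicity p (q ^ b)"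
    using assms by (intro prime_elem_multiplicity_mult_distrib) (auto simp: prime_gt_0_nat)
  also have "\<dots> = a" using assms
    by (simp add: multiplicity_distinct_prime_power multiplicity_same_power)
  finally show ?thesis .
qed

lemma prime_dvd_pq:
  fixes p q r :: nat
  assumes "prime p" "prime q" "prime r" "r dvd p ^ a * q ^ b"
  shows "r = p \<or> r = q"
  using assms by (metis prime_dvd_mult_iff prime_dvd_power primes_dvd_imp_eq)

lemma case1:
  assumes "prime p" "\<alpha> \<ge> 1"
  shows "dirichlet_conv (gen_mangoldt f hf) (gen_mangoldt g hg) (p ^ \<alpha>)
              = (of_nat \<alpha> - 1) * f p * g p / (hf p * hg p)"
proof -
  have p1: "p > 1" using assms prime_gt_1_nat by blast
  have dv: "{d. d dvd p ^ \<alpha>} = (\<lambda>i. p ^ i) ` {..\<alpha>}"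
    using divides_primepow_nat[OF assms(1)] by auto
  have inj: "inj_on (\<lambda>i. p ^ i) {..\<alpha>}"
    using p1 by (auto simp: inj_on_def power_inject_exp)
  have "dirichlet_conv (gen_mangoldt f hf) (gen_mangoldt g hg) (p ^ \<alpha>)
      = (\<Sum>i\<le>\<alpha>. gen_mangoldt f hf (p ^ i) * gen_mangoldt g hg (p ^ \<alpha> div p ^ i))"
    unfolding dirichlet_conv_def dv by (subst sum.reindex[OF inj]) simp
  also have "\<dots> = (\<Sum>i\<le>\<alpha>. if 1 \<le> i \<and> i < \<alpha> then f p / hf p * (g p / hg p) else 0)"
  proof (rule sum.cong[OF refl])
    fix i assume i: "i \<in> {..\<alpha>}"
    have d: "p ^ \<alpha> div p ^ i = p ^ (\<alpha> - i)" using i p1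
      by (simp add: power_diff)
    show "gen_mangoldt f hf (p ^ i) * gen_mangoldt g hg (p ^ \<alpha> div p ^ i) =
      (if 1 \<le> i \<and> i < \<alpha> then f p / hf p * (g p / hg p) else 0)"
    proof (cases "i = 0")
      case True then show ?thesis using gm_1[of f hf] gm_1[of g hg] by simp
    next
      case False
      show ?thesis
      proof (cases "i = \<alpha>")
        case True then show ?thesis using False p1 gm_1[of f hf] gm_1[of g hg] by simp
      next
        case False2: False
        then show ?thesis using False i d assms
          by (simp add: gm_pp)
      qed
    qed
  qed
  also have "\<dots> = (\<Sum>i\<in>{1..<\<alpha>}. f p / hf p * (g p / hg p))"
    by (rule sum.mono_neutral_cong_right) auto
  also have "\<dots> = of_nat (\<alpha> - 1) * (f p / hf p * (g p / hg p))" by simp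
  also have "\<dots> = (of_nat \<alpha> - 1) * f p * g p / (hf p * hg p)"
    using assms by (simp add: of_nat_diff)
  finally show ?thesis .
qed

lemma case2:
  assumes "prime p" "prime q" "p \<noteq> q" "\<alpha> \<ge> 1" "\<beta> \<ge> 1"
  shows "dirichlet_conv (gen_mangoldt f hf) (gen_mangoldt g hg) (p ^ \<alpha> * q ^ \<beta>)
              = f p * g q / (hf p * hg q) + f q * g p / (hf q * hg p)"
proof -
  define n where "n = p ^ \<alpha> * q ^ \<beta>"
  have n0: "n > 0" using assms by (simp add: n_def prime_gt_0_nat)
  have pn: "p dvd n" "q dvd n" using assms by (auto simp: n_def dvd_power)
  have D: "{d. d dvd n \<and> PP d \<and> PP (n div d)} = {p ^ \<alpha>, q ^ \<beta>}"
  proof (intro equalityI subsetI)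
    fix d assume "d \<in> {d. d dvd n \<and> PP d \<and> PP (n div d)}"
    then obtain r k s j where d: "d dvd n" and r: "prime r" "k \<ge> 1" "d = r ^ k"
      and s: "prime s" "j \<ge> 1" "n div d = s ^ j"
      unfolding PP_def by auto
    have nd: "n = r ^ k * s ^ j" using d r s by (metis dvd_mult_div_cancel)
    have rd: "r dvd n" "s dvd n" using nd r s by (auto simp: dvd_power)
    have rpq: "r = p \<or> r = q" "s = p \<or> s = q"
      using prime_dvd_pq[OF assms(1,2)] r s rd unfolding n_def by blast+
    have "r \<noteq> s"
    proof
      assume "r = s"
      then have "n = r ^ (k + j)" using nd by (simp add: power_add)
      then have "p dvd r ^ (k+j)" "q dvd r ^ (k+j)" using pn by auto
      then have "p = r" "q = r" using assms r
        by (metis prime_dvd_power primes_dvd_imp_eq)+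
      then show False using assms by simp
    qed
    then consider "r = p" "s = q" | "r = q" "s = p" using rpq by auto
    then show "d \<in> {p ^ \<alpha>, q ^ \<beta>}"
    proof cases
      case 1
      have "multiplicity p n = \<alpha>" unfolding n_def using mult_pq assms by blast
      moreover have "multiplicity p n = k" using nd 1 mult_pq assms by metis
      ultimately show ?thesis using r 1 by simp
    next
      case 2
      have "multiplicity q n = \<beta>" unfolding n_def using mult_pq assms
        by (metis mult.commute)
      moreover have "multiplicity q n = k" using nd 2 mult_pq assms by metis
      ultimately show ?thesis using r 2 by simp
    qed
  next
    fix d assume "d \<in> {p ^ \<alpha>, q ^ \<beta>}"
    then show "d \<in> {d. d dvd n \<and> PP d \<and> PP (n div d)}"
    proof
      assume "d = p ^ \<alpha>"
      moreover have "n div p ^ \<alpha> = q ^ \<beta>" using assms by (simp add: n_def prime_gt_0_nat)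
      ultimately show ?thesis using assms unfolding PP_def n_def by auto
    next
      assume "d \<in> {q ^ \<beta>}"
      then have "d = q ^ \<beta>" by simp
      moreover have "n div q ^ \<beta> = p ^ \<alpha>" using assms by (simp add: n_def prime_gt_0_nat)
      ultimately show ?thesis using assms unfolding PP_def n_def by auto
    qed
  qed
  have ne: "p ^ \<alpha> \<noteq> q ^ \<beta>" using assms prime_power_inj'(1) by (metis not_one_le_zero neq0_conv)
  have "dirichlet_conv (gen_mangoldt f hf) (gen_mangoldt g hg) n
     = gen_mangoldt f hf (p ^ \<alpha>) * gen_mangoldt g hg (n div p ^ \<alpha>)
       + gen_mangoldt f hf (q ^ \<beta>) * gen_mangoldt g hg (n div q ^ \<beta>)"
    using conv_restrict[OF n0] D ne by simp
  also have "n div p ^ \<alpha> = q ^ \<beta>" using assms by (simp add: n_def prime_gt_0_nat)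
  also have "n div q ^ \<beta> = p ^ \<alpha>" using assms by (simp add: n_def prime_gt_0_nat)
  finally show ?thesis using assms by (simp add: gm_pp n_def)
qed

lemma case3:
  assumes "n > 0" "\<nexists>p \<alpha>. prime p \<and> \<alpha> \<ge> 1 \<and> n = p ^ \<alpha>"
    "\<nexists>p q \<alpha> \<beta>. prime p \<and> prime q \<and> p \<noteq> q \<and> \<alpha> \<ge> 1 \<and> \<beta> \<ge> 1 \<and> n = p ^ \<alpha> * q ^ \<beta>"
  shows "dirichlet_conv (gen_mangoldt f hf) (gen_mangoldt g hg) n = 0"
proof -
  have "{d. d dvd n \<and> PP d \<and> PP (n div d)} = {}"
  proof (rule ccontr)
    assume "{d. d dvd n \<and> PP d \<and> PP (n div d)} \<noteq> {}"
    then obtain d r k s j where d: "d dvd n" and r: "prime r" "k \<ge> 1" "d = r ^ k"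
      and s: "prime s" "j \<ge> 1" "n div d = s ^ j"
      unfolding PP_def by auto
    have nd: "n = r ^ k * s ^ j" using d r s by (metis dvd_mult_div_cancel)
    show False
    proof (cases "r = s")
      case True
      then have "n = r ^ (k + j)" using nd by (simp add: power_add)
      then show False using assms(2) r le_add1 order_trans by (metis add_leD1)
    next
      case False
      then show False using assms(3) r(1,2) s(1,2) nd by blast
    qed
  qed
  then show ?thesis using conv_restrict[OF assms(1), of f hf g hg] by (simp only: sum.empty)
qed

theorem theorem2p5:
  fixes f g hf hg :: "nat \<Rightarrow> complex" and n :: nat
  assumes "L_additive_with f hf" and "L_additive_with g hg"
    and "\<And>k. k > 0 \<Longrightarrow> hf k \<noteq> 0" and "\<And>k. k > 0 \<Longrightarrow> hg k \<noteq> 0"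
    and "n > 0"
  shows "(\<forall>p \<alpha>. prime p \<and> \<alpha> \<ge> 1 \<and> n = p ^ \<alpha> \<longrightarrow>
            dirichlet_conv (gen_mangoldt f hf) (gen_mangoldt g hg) n
              = (of_nat \<alpha> - 1) * f p * g p / (hf p * hg p))
       \<and> (\<forall>p q \<alpha> \<beta>. prime p \<and> prime q \<and> p \<noteq> q \<and> \<alpha> \<ge> 1 \<and> \<beta> \<ge> 1 \<and> n = p ^ \<alpha> * q ^ \<beta> \<longrightarrow>
            dirichlet_conv (gen_mangoldt f hf) (gen_mangoldt g hg) n
              = f p * g q / (hf p * hg q) + f q * g p / (hf q * hg p))
       \<and> ((\<nexists>p \<alpha>. prime p \<and> \<alpha> \<ge> 1 \<and> n = p ^ \<alpha>) \<and>
          (\<nexists>p q \<alpha> \<beta>. prime p \<and> prime q \<and> p \<noteq> q \<and> \<alpha> \<ge> 1 \<and> \<beta> \<ge> 1 \<and> n = p ^ \<alpha> * q ^ \<beta>) \<longrightarrow>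
            dirichlet_conv (gen_mangoldt f hf) (gen_mangoldt g hg) n = 0)"
proof (intro conjI allI impI)
  fix p \<alpha> assume "prime p \<and> \<alpha> \<ge> 1 \<and> n = p ^ \<alpha>"
  then show "dirichlet_conv (gen_mangoldt f hf) (gen_mangoldt g hg) n
              = (of_nat \<alpha> - 1) * f p * g p / (hf p * hg p)" using case1 by blast
next
  fix p q \<alpha> \<beta> assume "prime p \<and> prime q \<and> p \<noteq> q \<and> \<alpha> \<ge> 1 \<and> \<beta> \<ge> 1 \<and> n = p ^ \<alpha> * q ^ \<beta>"
  then show "dirichlet_conv (gen_mangoldt f hf) (gen_mangoldt g hg) n
              = f p * g q / (hf p * hg q) + f q * g p / (hf q * hg p)" using case2 by blast
next
  assume "(\<nexists>p \<alpha>. prime p \<and> \<alpha> \<ge> 1 \<and> n = p ^ \<alpha>) \<and>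
          (\<nexists>p q \<alpha> \<beta>. prime p \<and> prime q \<and> p \<noteq> q \<and> \<alpha> \<ge> 1 \<and> \<beta> \<ge> 1 \<and> n = p ^ \<alpha> * q ^ \<beta>)"
  then show "dirichlet_conv (gen_mangoldt f hf) (gen_mangoldt g hg) n = 0"
    using case3[OF assms(5)] by blast
qed

end
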